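(* Let $Z\subseteq\{0,1\}^n$ be nonempty and $\bm a,\bm c\in\mathbb R^n$. The problem $$\text{(I)}\quad \min\ \bm a^\top\bm x+\bm c^\top\bm z\ \ \text{s.t.}\ \ \|\bm x\|_2^2\le1,\ x_i(1-z_i)=0\ (i=1,\dots,n),\ \bm x\in\mathbb R^n,\ \bm z\in Z$$ is equivalent to the problem $$\text{(II)}\quad \min\ \bm a^\top\bm x+\bm c^\top\bm z\ \ \text{s.t.}\ \ (\bm x,\bm z)\in P(\bm a),$$ in the sense that (I) and (II) have the same optimal objective value and there exists an optimal solution of (II) that is also optimal for (I).
   Context: For $\bm\alpha\in\mathbb R^n$, $P_0(\bm\alpha)=\{(\bm x,\bm z)\in\mathbb R^n\times Z:\ \sum_{i=1}^n|\alpha_ix_i|\le\sqrt{\sum_{i=1}^n\alpha_i^2z_i}\}$ and $P(\bm\alpha)=\operatorname{conv}(P_0(\bm\alpha))$, the convex hull. *)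

theory Defs
  imports "HOL-Analysis.Analysis"
begin

definition P0 :: "real^'n::finite \<Rightarrow> (real^'n) set \<Rightarrow> ((real^'n) \<times> (real^'n)) set" where
  "P0 \<alpha> Z = {(x, z). z \<in> Z \<and>
      (\<Sum>i\<in>UNIV. \<bar>\<alpha>$i * x$i\<bar>) \<le> sqrt (\<Sum>i\<in>UNIV. (\<alpha>$i)^2 * z$i)}"

definition P :: "real^'n::finite \<Rightarrow> (real^'n) set \<Rightarrow> ((real^'n) \<times> (real^'n)) set" where
  "P \<alpha> Z = convex hull (P0 \<alpha> Z)"

definition feasI :: "(real^'n::finite) set \<Rightarrow> ((real^'n) \<times> (real^'n)) set" where
  "feasI Z = {(x, z). (\<Sum>i\<in>UNIV. (x$i)^2) \<le> 1 \<and> (\<forall>i. x$i * (1 - z$i) = 0) \<and> z \<in> Z}"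

end

theory Submission
  imports Defs
begin

lemma inf_attained:
  fixes F :: "'a \<Rightarrow> real"
  assumes "p \<in> A" "\<And>q. q \<in> A \<Longrightarrow> F p \<le> F q"
  shows "(INF q\<in>A. F q) = F p"
proof (rule antisym)
  show "(INF q\<in>A. F q) \<le> F p"
    by (rule cINF_lower) (use assms in \<open>auto intro!: bdd_belowI2\<close>)
  show "F p \<le> (INF q\<in>A. F q)"
    by (rule cINF_greatest) (use assms in auto)
qed

lemma finite_01:
  "finite {z::real^'n::finite. \<forall>i. z$i = 0 \<or> z$i = 1}"
proof -
  have "{z::real^'n. \<forall>i. z$i = 0 \<or> z$i = 1} \<subseteq> range (\<lambda>f::'n\<Rightarrow>bool. \<chi> i. if f i then 1 else 0)"
  proof
    fix z :: "real^'n" assume "z \<in> {z. \<forall>i. z$i = 0 \<or> z$i = 1}"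
    then have "z = (\<chi> i. if z$i = 1 then 1 else 0)" by (auto simp: vec_eq_iff)
    then show "z \<in> range (\<lambda>f::'n\<Rightarrow>bool. \<chi> i. if f i then 1 else 0)"
      by (intro image_eqI[where x="\<lambda>i. z$i = 1"]) auto
  qed
  then show ?thesis by (rule finite_subset) simp
qed

theorem proposition3:
  fixes Z :: "(real^'n::finite) set" and a c :: "real^'n"
  assumes "Z \<noteq> {}"
    and "\<And>z i. z \<in> Z \<Longrightarrow> z$i = 0 \<or> z$i = 1"
  shows "(INF p\<in>feasI Z. a \<bullet> fst p + c \<bullet> snd p) = (INF p\<in>P a Z. a \<bullet> fst p + c \<bullet> snd p)
    \<and> (\<exists>p\<in>P a Z. (\<forall>q\<in>P a Z. a \<bullet> fst p + c \<bullet> snd p \<le> a \<bullet> fst q + c \<bullet> snd q)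
           \<and> p \<in> feasI Z \<and> (\<forall>q\<in>feasI Z. a \<bullet> fst p + c \<bullet> snd p \<le> a \<bullet> fst q + c \<bullet> snd q))"
proof -
  define F where "F p = a \<bullet> fst p + c \<bullet> snd p" for p :: "(real^'n) \<times> (real^'n)"
  define S where "S z = (\<Sum>i\<in>UNIV. (a$i)^2 * z$i)" for z :: "real^'n"
  define g where "g z = c \<bullet> z - sqrt (S z)" for z
  have fin: "finite Z" using finite_subset[OF _ finite_01] assms(2) by blast
  define m where "m = Min (g ` Z)"
  have "m \<in> g ` Z" unfolding m_def using fin assms(1) by (intro Min_in) auto
  then obtain zs where zs: "zs \<in> Z" "g zs = m" by auto
  have mle: "m \<le> g z" if "z \<in> Z" for z unfolding m_def using fin that by (intro Min_le) auto
  have zsq: "z$i * z$i = z$i" if "z \<in> Z" for z i using assms(2)[OF that, of i] by auto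
  have Snn: "S z \<ge> 0" if "z \<in> Z" for z
    unfolding S_def using assms(2)[OF that] by (intro sum_nonneg) (metis mult_nonneg_nonneg order_refl zero_le_power2 zero_le_one)
  have LI: "m \<le> F p" if pin: "p \<in> feasI Z" for p
  proof -
    obtain x z where p: "p = (x, z)" and x1: "(\<Sum>i\<in>UNIV. (x$i)^2) \<le> 1"
      and xz: "\<And>i. x$i * (1 - z$i) = 0" and z: "z \<in> Z"
    proof -
      obtain x z where pe: "p = (x, z)" by (cases p)
      from pin have "(\<Sum>i\<in>UNIV. (x$i)^2) \<le> 1 \<and> (\<forall>i. x$i * (1 - z$i) = 0) \<and> z \<in> Z"
        unfolding feasI_def pe by blast
      then show ?thesis using that pe by blast
    qed
    define w where "w = (\<chi> i. a$i * z$i)"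
    have "a \<bullet> x = w \<bullet> x"
      unfolding inner_vec_def w_def
    proof (intro sum.cong refl)
      fix i
      have "x$i = x$i * z$i" using xz[of i] by (simp add: algebra_simps)
      then show "a $ i \<bullet> x $ i = (\<chi> i. a $ i * z $ i) $ i \<bullet> x $ i"
        by (simp, metis mult.assoc mult.commute)
    qed
    have nw: "norm w = sqrt (S z)"
      unfolding norm_vec_def L2_set_def S_def w_def
      by (rule arg_cong[where f=sqrt], rule sum.cong, simp,
          simp add: power2_eq_square zsq[OF z] mult.assoc mult.left_commute)
    have nx: "norm x \<le> 1"
      unfolding norm_vec_def L2_set_def using x1 by simp
    have "\<bar>w \<bullet> x\<bar> \<le> norm w * norm x" by (rule Cauchy_Schwarz_ineq2)
    also have "\<dots> \<le> norm w" using nx mult_left_mono[OF nx norm_ge_zero[of w]] by simp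
    finally have "a \<bullet> x \<ge> - sqrt (S z)" using \<open>a \<bullet> x = w \<bullet> x\<close> nw by linarith
    then have "F p \<ge> g z" unfolding F_def g_def p by simp
    with mle[OF z] show ?thesis by linarith
  qed
  have L0: "m \<le> F p" if pin: "p \<in> P0 a Z" for p
  proof -
    obtain x z where p: "p = (x, z)" and z: "z \<in> Z"
      and b: "(\<Sum>i\<in>UNIV. \<bar>a$i * x$i\<bar>) \<le> sqrt (S z)"
    proof -
      obtain x z where pe: "p = (x, z)" by (cases p)
      from pin have "z \<in> Z \<and> (\<Sum>i\<in>UNIV. \<bar>a$i * x$i\<bar>) \<le> sqrt (S z)"
        unfolding P0_def S_def pe by blast
      then show ?thesis using that pe by blast
    qed
    have "- (a \<bullet> x) \<le> (\<Sum>i\<in>UNIV. \<bar>a$i * x$i\<bar>)"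
      unfolding inner_vec_def sum_negf[symmetric] by (intro sum_mono) auto
    then have "F p \<ge> g z" using b unfolding F_def g_def p by simp
    with mle[OF z] show ?thesis by linarith
  qed
  have LP: "m \<le> F p" if "p \<in> P a Z" for p
  proof -
    have cv: "convex {p. m \<le> F p}"
      unfolding convex_def
    proof (intro allI impI ballI, simp)
      fix u v :: real and x y :: "(real^'n) \<times> (real^'n)"
      assume h: "m \<le> F x" "m \<le> F y" "0 \<le> u" "0 \<le> v" "u + v = 1"
      have e: "F (u *\<^sub>R x + v *\<^sub>R y) = u * F x + v * F y"
        unfolding F_def by (simp add: inner_add_right algebra_simps)
      have "u * m \<le> u * F x" "v * m \<le> v * F y" using h by (auto intro: mult_left_mono)
      then show "m \<le> F (u *\<^sub>R x + v *\<^sub>R y)" unfolding e using h(5)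
        by (metis add_mono mult_1 distrib_right)
    qed
    have "P a Z \<subseteq> {p. m \<le> F p}"
      unfolding P_def by (rule hull_minimal) (use L0 cv in auto)
    then show ?thesis using that by auto
  qed
  define s where "s = sqrt (S zs)"
  define xs where "xs = (\<chi> i. - (a$i * zs$i) / s)"
  have s2: "s^2 = S zs" unfolding s_def using Snn[OF zs(1)] by simp
  have s0: "s \<ge> 0" unfolding s_def using Snn[OF zs(1)] by simp
  have sq: "(\<Sum>i\<in>UNIV. (a$i * zs$i)^2) = S zs"
    unfolding S_def by (rule sum.cong) (simp_all add: power2_eq_square zsq[OF zs(1)] mult.assoc mult.left_commute)
  have ax: "a \<bullet> xs = - s"
  proof -
    have "a \<bullet> xs = (\<Sum>i\<in>UNIV. - ((a$i * zs$i)^2) / s)"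
      unfolding inner_vec_def xs_def
      by (rule sum.cong) (simp_all add: power2_eq_square zsq[OF zs(1)] mult.assoc mult.left_commute)
    also have "\<dots> = - S zs / s" using sq by (simp add: sum_divide_distrib[symmetric] sum_negf)
    also have "\<dots> = - s" using s2 s0 by (cases "s = 0") (auto simp: power2_eq_square field_simps)
    finally show ?thesis .
  qed
  have ps_feas: "(xs, zs) \<in> feasI Z"
  proof -
    have "(\<Sum>i\<in>UNIV. (xs$i)^2) = (\<Sum>i\<in>UNIV. (a$i * zs$i)^2) / s^2"
      unfolding xs_def by (simp add: sum_divide_distrib power_divide)
    also have "\<dots> \<le> 1" using sq s2 by (cases "s = 0") auto
    finally have "(\<Sum>i\<in>UNIV. (xs$i)^2) \<le> 1" .
    moreover have "xs$i * (1 - zs$i) = 0" for i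
      using assms(2)[OF zs(1), of i] unfolding xs_def by auto
    ultimately show ?thesis using zs(1) unfolding feasI_def by blast
  qed
  have ps_P0: "(xs, zs) \<in> P0 a Z"
  proof -
    have "(\<Sum>i\<in>UNIV. \<bar>a$i * xs$i\<bar>) = (\<Sum>i\<in>UNIV. (a$i * zs$i)^2 / s)"
      unfolding xs_def
    proof (rule sum.cong, simp)
      fix i
      have "zs$i = 0 \<or> zs$i = 1" using assms(2)[OF zs(1)] by blast
      then show "\<bar>a$i * (\<chi> i. - (a$i * zs$i) / s)$i\<bar> = (a$i * zs$i)^2 / s"
      proof
        assume "zs$i = 0" then show ?thesis by simp
      next
        assume z1: "zs$i = 1"
        have "a$i * (- (a$i * 1) / s) = - (a$i*a$i/s)" by simp
        moreover have "a$i*a$i/s \<ge> 0" using s0 by simp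
        ultimately have "\<bar>a$i * (- (a$i * 1) / s)\<bar> = (a$i*1)^2 / s" using s0 by (simp add: power2_eq_square)
        then show ?thesis using z1 by simp
      qed
    qed
    also have "\<dots> = S zs / s" using sq by (simp add: sum_divide_distrib[symmetric])
    also have "\<dots> = s"
    proof (cases "s = 0")
      case True then show ?thesis by simp
    next
      case False
      have "S zs = s * s" using s2 by (simp add: power2_eq_square)
      then show ?thesis using False by simp
    qed
    finally have "(\<Sum>i\<in>UNIV. \<bar>a$i * xs$i\<bar>) = sqrt (\<Sum>i\<in>UNIV. (a$i)^2 * zs$i)"
      unfolding s_def S_def .
    then show ?thesis using zs(1) unfolding P0_def mem_Collect_eq prod.case by (intro conjI) simp_all
  qed
  have ps_P: "(xs, zs) \<in> P a Z" unfolding P_def by (rule hull_inc[OF ps_P0])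
  have Fps: "F (xs, zs) = m" using ax zs(2) unfolding F_def g_def s_def by simp
  have optI: "\<forall>q\<in>feasI Z. F (xs, zs) \<le> F q" using LI Fps by auto
  have optP: "\<forall>q\<in>P a Z. F (xs, zs) \<le> F q" using LP Fps by auto
  have "(INF q\<in>feasI Z. F q) = F (xs, zs)" using inf_attained[OF ps_feas] optI by blast
  moreover have "(INF q\<in>P a Z. F q) = F (xs, zs)" using inf_attained[OF ps_P] optP by blast
  ultimately have "(INF q\<in>feasI Z. F q) = (INF q\<in>P a Z. F q)" by simp
  moreover have "\<exists>p\<in>P a Z. (\<forall>q\<in>P a Z. F p \<le> F q) \<and> p \<in> feasI Z \<and> (\<forall>q\<in>feasI Z. F p \<le> F q)"
    using ps_P ps_feas optI optP by blast
  ultimately show ?thesis unfolding F_def by blast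
qed

end
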